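(* Let $p,q$ be positive integers with $p+q$ odd. For all $n\ge1$: (a) $y_n,[p]_n,[q]_n\in\mathcal{J}^{p,q}_n$; (b) $\psi_n(y_n)=1$, $\psi_n([p]_n)=p$, $\psi_n([q]_n)=q$ in $\mathbb{Z}_{2^{\lfloor n/2\rfloor}}$; (c) $\Delta_n(y_n)=(0,p-q)$, $\Delta_n([p]_n)=(1,p(p-q))$, $\Delta_n([q]_n)=(1,q(p-q))$ in $D_{2^{\lfloor n/2\rfloor+1}}$ (integers reduced modulo $2^{\lfloor n/2\rfloor}$).
   Context: Let $p,q$ be positive integers with $p+q$ odd. $\mathbb{Z}_{2^k}$ denotes the integers modulo $2^k$ ($\mathbb{Z}_1$ trivial); as $p+q$ is odd, division by $p+q$ and $(p+q)^2$ is well defined in $\mathbb{Z}_{2^k}$. For $m\ge1$, $D_{2m}$ is the dihedral group of order $2m$, realized as pairs $(f,x)$, $f\in\mathbb{Z}_2$, $x\in\mathbb{Z}_m$, with product $(f_1,x_1)(f_2,x_2)=(f_1+f_2,x_1+(-1)^{f_1}x_2)$. Define $\Phi:D_{2m}\to D_{2m}$, $\Phi((f,x))=(f,\delta(f=1)(p+q)(p-q)-x)$, where $\delta(f=1)$ is $1$ if $f=1$ and $0$ otherwise. $\mathrm{Aut}(T_1)$ is the trivial group $\{e\}$; for $k\ge1$, $\mathrm{Aut}(T_{k+1})$ is the set of triples $g=(g_f,g_L,g_R)$, $g_f\in\mathbb{Z}_2$, $g_L,g_R\in\mathrm{Aut}(T_k)$, with product $(f,A,B)(g,C,D)=(f+g,AC,BD)$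 if $f=0$ and $(f+g,AD,BC)$ if $f=1$; subscripts chain ($g_{LR}=(g_L)_R$, $g_{Lf}=(g_L)_f$). Recursively: $\mathcal{J}_1=\mathrm{Aut}(T_2)$, $\psi_1=0$, $\Delta_1(g)=(g_f,0)$; $\mathcal{J}_2=\{g\in\mathrm{Aut}(T_3):g_L=g_R\}$, $\psi_2(g)=\delta(g_{Lf}=1)\in\mathbb{Z}_2$, $\Delta_2(g)=(g_f,\psi_2(g))$; for $n\ge3$, $\mathcal{J}_n=\{g\in\mathrm{Aut}(T_{n+1}):g_L,g_R\in\mathcal{J}_{n-1},\ \Delta_{n-1}(g_L)=\Phi(\Delta_{n-1}(g_R))\}$, with $\psi_n:\mathcal{J}_n\to\mathbb{Z}_{2^{\lfloor n/2\rfloor}}$ given by $\psi_n(g)=(\psi_{n-1}(g_L)+\psi_{n-1}(g_R))/(p+q)$ for odd $n$ and $\psi_n(g)=\big(2(\psi_{n-2}(g_{LL})+\psi_{n-2}(g_{RL}))-\delta(g_{Lf}=1)(p+q)(p-q)\big)/(p+q)^2$ for even $n$ (with $2\psi_{n-2}(\cdot)$ read in $\mathbb{Z}_{2^{n/2}}$), and $\Delta_n:\mathcal{J}_n\to D_{2^{\lfloor n/2\rfloor+1}}$ given by $\Delta_n(g)=(g_f,\psi_{n-1}(g_L)-\psi_{n-1}(g_R))$ for odd $n$ and $\Delta_n(g)=(g_f,(p+q)\psi_n(g)-2\psi_{n-1}(g_R))$ for even $n$. Elements $[p]_n,[q]_n\in\mathrm{Aut}(T_{n+1})$: $[p]_1=[q]_1=(1,e,e)$,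 and for $n\ge2$, $[p]_n=(1,[p]_{n-1}^{\,p},[q]_{n-1}^{\,p})$, $[q]_n=(1,[p]_{n-1}^{\,q},[q]_{n-1}^{\,q})$ (powers in $\mathrm{Aut}(T_n)$). Also $y_n=(0,[p]_{n-1},[q]_{n-1})$ for $n\ge2$, and $y_1=(0,e,e)$ is the identity of $\mathrm{Aut}(T_2)$. *)

theory Defs
  imports "HOL-Number_Theory.Cong"
begin

text \<open>AE is the unique element of Aut(T_1); AN f A B is the triple (f,A,B).
  The flag f = True stands for 1 in Z_2.\<close>
datatype aut = AE | AN bool aut aut

text \<open>autlev n g: g belongs to Aut(T_(n+1)).\<close>
fun autlev :: "nat \<Rightarrow> aut \<Rightarrow> bool" where
  "autlev 0 g = (g = AE)"
| "autlev (Suc n) AE = False"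
| "autlev (Suc n) (AN f a b) = (autlev n a \<and> autlev n b)"

fun af :: "aut \<Rightarrow> bool" where "af AE = False" | "af (AN f a b) = f"
fun aL :: "aut \<Rightarrow> aut" where "aL AE = AE" | "aL (AN f a b) = a"
fun aR :: "aut \<Rightarrow> aut" where "aR AE = AE" | "aR (AN f a b) = b"

fun amult :: "aut \<Rightarrow> aut \<Rightarrow> aut" where
  "amult (AN f A B) (AN g C D) =
     (if f then AN (f \<noteq> g) (amult A D) (amult B C)
           else AN (f \<noteq> g) (amult A C) (amult B D))"
| "amult x y = AE"

fun aid :: "nat \<Rightarrow> aut" where
  "aid 0 = AE"
| "aid (Suc n) = AN False (aid n) (aid n)"

fun apow :: "nat \<Rightarrow> aut \<Rightarrow> nat \<Rightarrow> aut" where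
  "apow n g 0 = aid n"
| "apow n g (Suc r) = amult g (apow n g r)"

text \<open>Division by a (odd) in Z_(2^k): the canonical representative y with a*y = x.\<close>
definition zdiv :: "nat \<Rightarrow> int \<Rightarrow> int \<Rightarrow> int" where
  "zdiv k a x = (THE y. 0 \<le> y \<and> y < 2 ^ k \<and> [a * y = x] (mod 2 ^ k))"

text \<open>Elements of D_(2m) as pairs (f,x); equality in D_(2m) with x read mod m.\<close>
definition deq :: "int \<Rightarrow> bool \<times> int \<Rightarrow> bool \<times> int \<Rightarrow> bool" where
  "deq m u v = (fst u = fst v \<and> [snd u = snd v] (mod m))"

definition Phi :: "nat \<Rightarrow> nat \<Rightarrow> bool \<times> int \<Rightarrow> bool \<times> int" where
  "Phi p q u = (fst u, (if fst u then (int p + int q) * (int p - int q) else 0) - snd u)"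

fun psi :: "nat \<Rightarrow> nat \<Rightarrow> nat \<Rightarrow> aut \<Rightarrow> int" where
  "psi p q 0 g = 0"
| "psi p q (Suc 0) g = 0"
| "psi p q (Suc (Suc 0)) g = (if af (aL g) then 1 else 0)"
| "psi p q (Suc (Suc (Suc k))) g =
     (if odd (k + 3)
      then zdiv ((k + 3) div 2) (int p + int q)
             (psi p q (k + 2) (aL g) + psi p q (k + 2) (aR g))
      else zdiv ((k + 3) div 2) ((int p + int q) ^ 2)
             (2 * (psi p q (k + 1) (aL (aL g)) + psi p q (k + 1) (aL (aR g)))
              - (if af (aL g) then (int p + int q) * (int p - int q) else 0)))"

text \<open>Delta_n; the second component is to be read modulo 2^(n div 2).\<close>
fun Delta :: "nat \<Rightarrow> nat \<Rightarrow> nat \<Rightarrow> aut \<Rightarrow> bool \<times> int" where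
  "Delta p q 0 g = (af g, 0)"
| "Delta p q (Suc 0) g = (af g, 0)"
| "Delta p q (Suc (Suc 0)) g = (af g, psi p q 2 g)"
| "Delta p q (Suc (Suc (Suc k))) g =
     (if odd (k + 3)
      then (af g, psi p q (k + 2) (aL g) - psi p q (k + 2) (aR g))
      else (af g, (int p + int q) * psi p q (k + 3) g - 2 * psi p q (k + 2) (aR g)))"

fun inJ :: "nat \<Rightarrow> nat \<Rightarrow> nat \<Rightarrow> aut \<Rightarrow> bool" where
  "inJ p q 0 g = False"
| "inJ p q (Suc 0) g = autlev 1 g"
| "inJ p q (Suc (Suc 0)) g = (autlev 2 g \<and> aL g = aR g)"
| "inJ p q (Suc (Suc (Suc k))) g =
     (autlev (k + 3) g \<and> inJ p q (k + 2) (aL g) \<and> inJ p q (k + 2) (aR g) \<and>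
      deq (2 ^ ((k + 2) div 2)) (Delta p q (k + 2) (aL g)) (Phi p q (Delta p q (k + 2) (aR g))))"

text \<open>brk r n = [r]_n in Aut(T_(n+1)), for r \<in> {p,q}; [p]_n = brk p q p n.\<close>
fun brk :: "nat \<Rightarrow> nat \<Rightarrow> nat \<Rightarrow> nat \<Rightarrow> aut" where
  "brk p q r 0 = AE"
| "brk p q r (Suc 0) = AN True AE AE"
| "brk p q r (Suc (Suc k)) =
     AN True (apow (Suc k) (brk p q p (Suc k)) r) (apow (Suc k) (brk p q q (Suc k)) r)"

definition yel :: "nat \<Rightarrow> nat \<Rightarrow> nat \<Rightarrow> aut" where
  "yel p q n = (if n \<le> 1 then AN False AE AE
                else AN False (brk p q p (n - 1)) (brk p q q (n - 1)))"

end

theory Submission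
  imports Defs
begin


lemma odd_coprime_pow2: "odd (a::int) \<Longrightarrow> coprime a (2^k)"
  by (simp add: coprime_commute)

lemma zdiv_ex: assumes "odd (a::int)" shows "\<exists>y. 0 \<le> y \<and> y < 2 ^ k \<and> [a * y = x] (mod 2 ^ k)"
proof -
  obtain u where u: "[a * u = 1] (mod 2^k)" using cong_solve_coprime_int[OF odd_coprime_pow2[OF assms]] by blast
  have "[a * ((u*x) mod 2^k) = a * (u * x)] (mod 2^k)"
    by (intro cong_mult cong_refl) (simp add: cong_def)
  also have "a * (u*x) = (a*u)*x" by simp
  also have "[(a*u)*x = 1 * x] (mod 2^k)" by (intro cong_mult u cong_refl)
  finally show ?thesis by (intro exI[of _ "(u*x) mod 2^k"]) auto
qed

lemma zdiv_uniq: assumes "odd (a::int)" "0 \<le> y1" "y1 < 2^k" "[a*y1 = x] (mod 2^k)"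
  "0 \<le> y2" "y2 < 2^k" "[a*y2 = x] (mod 2^k)" shows "y1 = y2"
proof -
  have "[a*y1 = a*y2] (mod 2^k)" using assms(4,7) by (metis cong_sym cong_trans)
  then have "[y1 = y2] (mod 2^k)" using cong_mult_lcancel[OF odd_coprime_pow2[OF assms(1)]] by blast
  then show ?thesis using cong_less_imp_eq_int assms by blast
qed

lemma zdiv_spec: assumes "odd (a::int)"
  shows "0 \<le> zdiv k a x \<and> zdiv k a x < 2 ^ k \<and> [a * zdiv k a x = x] (mod 2 ^ k)"
proof -
  obtain y where y: "0 \<le> y \<and> y < 2 ^ k \<and> [a * y = x] (mod 2 ^ k)" using zdiv_ex[OF assms] by blast
  have "zdiv k a x = y" unfolding zdiv_def
    by (rule the_equality) (use y zdiv_uniq[OF assms] in blast)+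
  then show ?thesis using y by simp
qed

lemma zdiv_cong: assumes "odd (a::int)" "[a*y = x] (mod 2^k)" shows "[zdiv k a x = y] (mod 2^k)"
proof -
  have "[a * zdiv k a x = a * y] (mod 2^k)" using zdiv_spec[OF assms(1)] assms(2) by (metis cong_sym cong_trans)
  then show ?thesis using cong_mult_lcancel[OF odd_coprime_pow2[OF assms(1)]] by blast
qed

lemma zdiv_0: "odd (a::int) \<Longrightarrow> zdiv k a 0 = 0"
  using zdiv_spec[of a k 0] zdiv_uniq[of a 0 k 0 "zdiv k a 0"] by (simp add: cong_refl)


lemma zdiv_add: assumes "odd (a::int)" "[X = Y + Z] (mod 2^k)"
  shows "[zdiv k a X = zdiv k a Y + zdiv k a Z] (mod 2^k)"
proof (rule zdiv_cong[OF assms(1)])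
  have "[a * zdiv k a Y = Y] (mod 2^k)" "[a * zdiv k a Z = Z] (mod 2^k)" using zdiv_spec[OF assms(1)] by auto
  then have "[a * zdiv k a Y + a * zdiv k a Z = Y + Z] (mod 2^k)" by (rule cong_add)
  then show "[a * (zdiv k a Y + zdiv k a Z) = X] (mod 2^k)" using assms(2)
    by (simp add: distrib_left) (metis cong_sym cong_trans)
qed

lemma zdiv_resp: assumes "odd (a::int)" "[X = Y] (mod 2^k)"
  shows "zdiv k a X = zdiv k a Y"
proof -
  have "[a * zdiv k a Y = X] (mod 2^k)" using zdiv_spec[OF assms(1), of k Y] assms(2) by (metis cong_sym cong_trans)
  then show ?thesis using zdiv_spec[OF assms(1)] zdiv_uniq[OF assms(1)] by blast
qed

definition dmul :: "bool \<times> int \<Rightarrow> bool \<times> int \<Rightarrow> bool \<times> int" where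
  "dmul u v = (fst u \<noteq> fst v, snd u + (if fst u then - snd v else snd v))"

lemma deq_pair[simp]: "deq m (f,x) (g,y) = (f = g \<and> [x = y] (mod m))"
  by (simp add: deq_def)

lemma deq_refl: "deq m u u" by (simp add: deq_def)
lemma deq_sym: "deq m u v \<Longrightarrow> deq m v u" by (auto simp: deq_def cong_sym)
lemma deq_trans: "deq m u v \<Longrightarrow> deq m v w \<Longrightarrow> deq m u w" by (auto simp: deq_def intro: cong_trans)
lemma deq_dmul: "deq m u u' \<Longrightarrow> deq m v v' \<Longrightarrow> deq m (dmul u v) (dmul u' v')"
  by (auto simp: deq_def dmul_def intro!: cong_add cong_diff cong_minus_minus_iff[THEN iffD2])
lemma deq_Phi: "deq m u v \<Longrightarrow> deq m (Phi p q u) (Phi p q v)"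
  by (auto simp: deq_def Phi_def intro!: cong_diff cong_refl cong_minus_minus_iff[THEN iffD2])
lemma Phi_Phi: "Phi p q (Phi p q u) = u" by (simp add: Phi_def)
lemma Phi_dmul: "Phi p q (dmul u v) = dmul (Phi p q u) (Phi p q v)"
  by (auto simp: Phi_def dmul_def)

lemma autlev_Suc_E: "autlev (Suc n) g \<Longrightarrow> g = AN (af g) (aL g) (aR g) \<and> autlev n (aL g) \<and> autlev n (aR g)"
  by (cases g) auto

lemma autlev_amult: "autlev n g \<Longrightarrow> autlev n h \<Longrightarrow> autlev n (amult g h)"
proof (induction n arbitrary: g h)
  case 0 then show ?case by simp
next
  case (Suc n)
  then obtain f a b f' a' b' where "g = AN f a b" "h = AN f' a' b'" by (meson autlev_Suc_E)
  with Suc show ?case by auto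
qed

lemma autlev_aid: "autlev n (aid n)" by (induction n) auto
lemma autlev_apow: "autlev n g \<Longrightarrow> autlev n (apow n g r)"
  by (induction r) (auto simp: autlev_aid autlev_amult)

lemma amult_parts: "af (amult (AN f a b) (AN f' a' b')) = (f \<noteq> f')"
  "aL (amult (AN f a b) (AN f' a' b')) = (if f then amult a b' else amult a a')"
  "aR (amult (AN f a b) (AN f' a' b')) = (if f then amult b a' else amult b b')"
  by auto

lemma psi_odd: "odd n \<Longrightarrow> 3 \<le> n \<Longrightarrow> psi p q n g =
   zdiv (n div 2) (int p + int q) (psi p q (n-1) (aL g) + psi p q (n-1) (aR g))"
proof -
  assume a: "odd n" "3 \<le> n"
  then have "n = Suc (Suc (Suc (n-3)))" by arith
  then obtain k where k: "n = Suc (Suc (Suc k))" by blast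
  show ?thesis using a unfolding k by (simp add: numeral_eq_Suc)
qed

lemma psi_even: "even n \<Longrightarrow> 3 \<le> n \<Longrightarrow> psi p q n g =
   zdiv (n div 2) ((int p + int q)^2) (2 * (psi p q (n-2) (aL (aL g)) + psi p q (n-2) (aL (aR g)))
              - (if af (aL g) then (int p + int q) * (int p - int q) else 0))"
proof -
  assume a: "even n" "3 \<le> n"
  then have "n = Suc (Suc (Suc (n-3)))" by arith
  then obtain k where k: "n = Suc (Suc (Suc k))" by blast
  show ?thesis using a unfolding k by (simp add: numeral_eq_Suc)
qed

lemma Delta_odd: "odd n \<Longrightarrow> 3 \<le> n \<Longrightarrow> Delta p q n g =
   (af g, psi p q (n-1) (aL g) - psi p q (n-1) (aR g))"
proof -
  assume a: "odd n" "3 \<le> n"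
  then have "n = Suc (Suc (Suc (n-3)))" by arith
  then obtain k where k: "n = Suc (Suc (Suc k))" by blast
  show ?thesis using a unfolding k by (simp add: numeral_eq_Suc)
qed

lemma Delta_even: "even n \<Longrightarrow> 3 \<le> n \<Longrightarrow> Delta p q n g =
   (af g, (int p + int q) * psi p q n g - 2 * psi p q (n-1) (aR g))"
proof -
  assume a: "even n" "3 \<le> n"
  then have "n = Suc (Suc (Suc (n-3)))" by arith
  then obtain k where k: "n = Suc (Suc (Suc k))" by blast
  show ?thesis using a unfolding k by (simp add: numeral_eq_Suc)
qed

lemma inJ_ge3: "3 \<le> n \<Longrightarrow> inJ p q n g = (autlev n g \<and> inJ p q (n-1) (aL g) \<and> inJ p q (n-1) (aR g) \<and>
      deq (2 ^ ((n-1) div 2)) (Delta p q (n-1) (aL g)) (Phi p q (Delta p q (n-1) (aR g))))"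
proof -
  assume a: "3 \<le> n"
  then have "n = Suc (Suc (Suc (n-3)))" by arith
  then obtain k where k: "n = Suc (Suc (Suc k))" by blast
  show ?thesis using a unfolding k by (simp add: numeral_eq_Suc)
qed

lemma inJ_autlev: "inJ p q n g \<Longrightarrow> autlev n g"
  by (cases "3 \<le> n") (auto simp: inJ_ge3 numeral_eq_Suc le_Suc_eq elim: inJ.elims)

lemma aid_facts: "psi p q n (aid n) = 0 \<and> Delta p q n (aid n) = (False, 0) \<and> (1 \<le> n \<longrightarrow> inJ p q n (aid n))"
  if "odd (int p + int q)"
proof (induction n rule: less_induct)
  case (less n)
  have o2: "odd ((int p + int q)^2)" using that by simp
  show ?case
  proof (cases "3 \<le> n")
    case True
    then have "n = Suc (Suc (Suc (n-3)))" by arith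
  then obtain k where k: "n = Suc (Suc (Suc k))" by blast
    have IH1: "psi p q (Suc (Suc k)) (aid (Suc (Suc k))) = 0 \<and> Delta p q (Suc (Suc k)) (aid (Suc (Suc k))) = (False, 0) \<and> inJ p q (Suc (Suc k)) (aid (Suc (Suc k)))"
      using less[of "n-1"] k by auto
    have IH2: "psi p q (Suc k) (aid (Suc k)) = 0"
      using less[of "n-2"] k by auto
    have af: "af (aid n) = False" "aR (aid n) = aid (Suc (Suc k))" "aL (aid n) = aid (Suc (Suc k))" "n - Suc 0 = Suc (Suc k)"
        by (simp_all add: k)
    have ps: "psi p q n (aid n) = 0"
    proof (cases "odd n")
      case True
      then show ?thesis using \<open>3 \<le> n\<close> IH1 that by (simp add: psi_odd k zdiv_0)
    next
      case False
      then show ?thesis using \<open>3 \<le> n\<close> IH2 o2 by (subst psi_even) (simp_all add: k zdiv_0)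
    qed
    moreover have "Delta p q n (aid n) = (False, 0)"
    proof -
      show ?thesis using IH1 ps True by (cases "odd n") (simp_all add: Delta_odd Delta_even af)
    qed
    moreover have "inJ p q n (aid n)"
      using IH1 True autlev_aid[of n] by (simp add: inJ_ge3 af Phi_def)
    ultimately show ?thesis by simp
  next
    case False
    then have "n = 0 \<or> n = 1 \<or> n = 2" by auto
    then show ?thesis by (auto simp: numeral_eq_Suc)
  qed
qed




lemma cong2: "[x = y] (mod m) \<Longrightarrow> [2*x = 2*(y::int)] (mod 2*m)"
  unfolding cong_iff_dvd_diff by (metis mult_dvd_mono dvd_refl right_diff_distrib)

lemma even_psi_alg:
 fixes M S c G H a1 a2 b1 b2 a1' a2' b1' b2' X1 X2 :: int
 assumes cg: "[a1 - a2 = (if fa then c else 0) - (b1 - b2)] (mod M)"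
 and ch: "[a1' - a2' = (if fa' then c else 0) - (b1' - b2')] (mod M)"
 and G: "[S*G = 2*(a1+b1) - (if fa then c else 0)] (mod 2*M)"
 and H: "[S*H = 2*(a1'+b1') - (if fa' then c else 0)] (mod 2*M)"
 and X1: "[X1 = a1 + (if fa then (if f then b2' else a2') else (if f then b1' else a1'))] (mod M)"
 and X2: "[X2 = b1 + (if fa then (if f then a2' else b2') else (if f then a1' else b1'))] (mod M)"
 shows "[S*(G+H) = 2*(X1+X2) - (if fa \<noteq> fa' then c else 0)] (mod 2*M)"
proof -
  from cg obtain tg where tg: "a1 - a2 - ((if fa then c else 0) - (b1 - b2)) = M*tg" unfolding cong_iff_dvd_diff dvd_def by blast
  from ch obtain th where th: "a1' - a2' - ((if fa' then c else 0) - (b1' - b2')) = M*th" unfolding cong_iff_dvd_diff dvd_def by blast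
  from G obtain tG where tG: "S*G - (2*(a1+b1) - (if fa then c else 0)) = 2*M*tG" unfolding cong_iff_dvd_diff dvd_def by blast
  from H obtain tH where tH: "S*H - (2*(a1'+b1') - (if fa' then c else 0)) = 2*M*tH" unfolding cong_iff_dvd_diff dvd_def by blast
  from X1 obtain t1 where t1: "X1 - (a1 + (if fa then (if f then b2' else a2') else (if f then b1' else a1'))) = M*t1" unfolding cong_iff_dvd_diff dvd_def by blast
  from X2 obtain t2 where t2: "X2 - (b1 + (if fa then (if f then a2' else b2') else (if f then a1' else b1'))) = M*t2" unfolding cong_iff_dvd_diff dvd_def by blast
  have "S*(G+H) - (2*(X1+X2) - (if fa \<noteq> fa' then c else 0)) = 2*M*(tG+tH-t1-t2 + (if fa then th else 0))"
    using tg th tG tH t1 t2 by (cases fa; cases fa'; cases f; simp add: algebra_simps)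
  then show ?thesis unfolding cong_iff_dvd_diff by simp
qed

lemma even_aux_alg0:
  fixes s M A B H a1 a2 b1 b2 d :: int
  assumes "[s*A = a1+a2] (mod M)" "[s*B = b1+b2] (mod M)"
    "[s^2*H = 2*(a1+b1) - d] (mod 2*M)" "[a1 - a2 = d - (b1 - b2)] (mod M)"
  shows "[s*(s*H) = s*(A+B)] (mod M)"
proof -
  from assms(1) obtain t1 where t1: "s*A - (a1+a2) = M*t1" unfolding cong_iff_dvd_diff dvd_def by blast
  from assms(2) obtain t2 where t2: "s*B - (b1+b2) = M*t2" unfolding cong_iff_dvd_diff dvd_def by blast
  from assms(3) obtain t3 where t3: "s^2*H - (2*(a1+b1) - d) = 2*M*t3" unfolding cong_iff_dvd_diff dvd_def by blast
  from assms(4) obtain t4 where t4: "a1 - a2 - (d - (b1 - b2)) = M*t4" unfolding cong_iff_dvd_diff dvd_def by blast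
  have "s*(s*H) - s*(A+B) = M*(2*t3 - t1 - t2 + t4)" using t1 t2 t3 t4 by (simp add: algebra_simps power2_eq_square)
  then show ?thesis unfolding cong_iff_dvd_diff by simp
qed

lemma even_aux_alg:
  fixes s A B H a1 a2 b1 b2 d :: int
  assumes "odd s" "[s*A = a1+a2] (mod 2^k)" "[s*B = b1+b2] (mod 2^k)"
    "[s^2*H = 2*(a1+b1) - d] (mod 2*2^k)" "[a1 - a2 = d - (b1 - b2)] (mod 2^k)"
  shows "[s*H = A+B] (mod 2^k)"
  using even_aux_alg0[OF assms(2-5)] cong_mult_lcancel[OF odd_coprime_pow2[OF assms(1)]] by blast




lemma even_aux:
  assumes o: "odd (int p + int q)" and ev: "even n" and n4: "4 \<le> n" and hJ: "inJ p q n h"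
  shows "[(int p + int q) * psi p q n h = psi p q (n-1) (aL h) + psi p q (n-1) (aR h)] (mod 2^(n div 2 - 1))"
proof -
  define s where "s = int p + int q"
  define c where "c = s * (int p - int q)"
  define K where "K = n div 2 - 1"
  have nK: "n div 2 = Suc K" "(n-1) div 2 = K" using ev n4 unfolding K_def by (auto elim!: evenE)
  have n1: "odd (n-1)" "3 \<le> n-1" "n - 1 - 1 = n - 2" using ev n4 by auto
  have X: "inJ p q (n-1) (aL h) \<and> inJ p q (n-1) (aR h) \<and> deq (2^((n-1) div 2)) (Delta p q (n-1) (aL h)) (Phi p q (Delta p q (n-1) (aR h)))"
    using hJ n4 inJ_ge3[of n p q h] by linarith
  have J: "inJ p q (n-1) (aL h)" "inJ p q (n-1) (aR h)"
     and C: "deq (2^K) (Delta p q (n-1) (aL h)) (Phi p q (Delta p q (n-1) (aR h)))"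
    using X unfolding nK by auto
  have C2: "af (aL h) = af (aR h)"
    "[psi p q (n-2) (aL (aL h)) - psi p q (n-2) (aR (aL h)) = (if af (aL h) then c else 0) - (psi p q (n-2) (aL (aR h)) - psi p q (n-2) (aR (aR h)))] (mod 2^K)"
    using C n1 by (auto simp: Delta_odd Phi_def c_def s_def)
  have A: "[s * psi p q (n-1) (aL h) = psi p q (n-2) (aL (aL h)) + psi p q (n-2) (aR (aL h))] (mod 2^K)"
    using zdiv_spec[OF o] n1 nK by (simp add: psi_odd s_def)
  have B: "[s * psi p q (n-1) (aR h) = psi p q (n-2) (aL (aR h)) + psi p q (n-2) (aR (aR h))] (mod 2^K)"
    using zdiv_spec[OF o] n1 nK by (simp add: psi_odd s_def)
  have o2: "odd (s^2)" using o s_def by simp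
  have Hh: "[s^2 * psi p q n h = 2 * (psi p q (n-2) (aL (aL h)) + psi p q (n-2) (aL (aR h))) - (if af (aL h) then c else 0)] (mod 2*2^K)"
    using zdiv_spec[OF o2, of "n div 2"] ev n4 nK by (simp add: psi_even s_def c_def)
  show ?thesis unfolding K_def[symmetric] s_def[symmetric]
    by (rule even_aux_alg[OF _ A B Hh]) (use o s_def C2 in auto)
qed


lemma inJ_dec: "inJ p q (Suc m) g \<Longrightarrow> 2 \<le> m \<Longrightarrow> g = AN (af g) (aL g) (aR g) \<and>
   inJ p q m (aL g) \<and> inJ p q m (aR g) \<and> deq (2^(m div 2)) (Delta p q m (aL g)) (Phi p q (Delta p q m (aR g)))"
proof -
  assume a: "inJ p q (Suc m) g" "2 \<le> m"
  have "autlev (Suc m) g \<and> inJ p q m (aL g) \<and> inJ p q m (aR g) \<and> deq (2^(m div 2)) (Delta p q m (aL g)) (Phi p q (Delta p q m (aR g)))"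
    using a inJ_ge3[of "Suc m" p q g] by simp
  then show ?thesis using autlev_Suc_E by blast
qed

lemma odd_constraint: "odd m \<Longrightarrow> 3 \<le> m \<Longrightarrow> deq M (Delta p q m x) (Phi p q (Delta p q m y)) \<Longrightarrow>
  af x = af y \<and> [psi p q (m-1) (aL x) - psi p q (m-1) (aR x) = (if af y then (int p + int q) * (int p - int q) else 0)
     - (psi p q (m-1) (aL y) - psi p q (m-1) (aR y))] (mod M)"
  by (simp add: Delta_odd Phi_def)

lemma even_delta_alg:
  fixes s P G H X2 b v a' b' M :: int
  assumes "[P = G + H] (mod 2*M)" "[X2 = b + v] (mod M)" "[s*H = a' + b'] (mod M)" "v = (if f then a' else b')"
  shows "[s*P - 2*X2 = (s*G - 2*b) + (if f then -(s*H - 2*b') else s*H - 2*b')] (mod 2*M)"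
proof -
  from assms(1) obtain t1 where t1: "P - (G + H) = 2*M*t1" unfolding cong_iff_dvd_diff dvd_def by blast
  from assms(2) obtain t2 where t2: "X2 - (b + v) = M*t2" unfolding cong_iff_dvd_diff dvd_def by blast
  from assms(3) obtain t3 where t3: "s*H - (a' + b') = M*t3" unfolding cong_iff_dvd_diff dvd_def by blast
  have "s*P - 2*X2 - ((s*G - 2*b) + (if f then -(s*H - 2*b') else s*H - 2*b')) = 2*M*(s*t1 - t2 + (if f then t3 else 0))"
    using t1 t2 t3 assms(4) by (cases f; simp add: algebra_simps)
  then show ?thesis unfolding cong_iff_dvd_diff by simp
qed


lemma amult_sel: "x = AN (af x) (aL x) (aR x) \<Longrightarrow> y = AN (af y) (aL y) (aR y) \<Longrightarrow>
  af (amult x y) = (af x \<noteq> af y) \<and>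
  aL (amult x y) = (if af x then amult (aL x) (aR y) else amult (aL x) (aL y)) \<and>
  aR (amult x y) = (if af x then amult (aR x) (aL y) else amult (aR x) (aR y))"
  by (cases x; cases y) auto

lemma hom:
  assumes o: "odd (int p + int q)"
  shows "1 \<le> n \<Longrightarrow> inJ p q n g \<Longrightarrow> inJ p q n h \<Longrightarrow> inJ p q n (amult g h) \<and>
    [psi p q n (amult g h) = psi p q n g + psi p q n h] (mod 2^(n div 2)) \<and>
    deq (2^(n div 2)) (Delta p q n (amult g h)) (dmul (Delta p q n g) (Delta p q n h))"
proof (induction n arbitrary: g h rule: less_induct)
  case (less n)
  consider "n = 1" | "n = 2" | "3 \<le> n" using less.prems(1) by linarith
  then show ?case
  proof cases
    case 1
    from less.prems have "autlev 1 g" "autlev 1 h" by (simp_all add: 1)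
    then obtain f f' where "g = AN f AE AE" "h = AN f' AE AE"
      by (metis One_nat_def autlev_Suc_E autlev.simps(1))
    then show ?thesis by (simp add: 1 dmul_def)
  next
    case 2
    from less.prems have "autlev 2 g" "aL g = aR g" "autlev 2 h" "aL h = aR h"
      by (simp_all add: 2 numeral_eq_Suc)
    then obtain f f' fa fa' where "g = AN f (AN fa AE AE) (AN fa AE AE)" "h = AN f' (AN fa' AE AE) (AN fa' AE AE)"
      by (metis One_nat_def Suc_1 autlev_Suc_E autlev.simps(1))
    then show ?thesis
      by (cases f; cases fa; cases f'; cases fa'; simp add: 2 numeral_eq_Suc dmul_def cong_def)
  next
    case 3
    define s where "s = int p + int q"
    define c where "c = s * (int p - int q)"
    obtain m where m: "n = Suc m" "2 \<le> m" using 3 by (cases n) auto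
    have IH1: "\<And>x y. inJ p q m x \<Longrightarrow> inJ p q m y \<Longrightarrow> inJ p q m (amult x y) \<and>
      [psi p q m (amult x y) = psi p q m x + psi p q m y] (mod 2^(m div 2)) \<and>
      deq (2^(m div 2)) (Delta p q m (amult x y)) (dmul (Delta p q m x) (Delta p q m y))"
      using less.IH[of m] m by auto
    have dg: "g = AN (af g) (aL g) (aR g) \<and> inJ p q m (aL g) \<and> inJ p q m (aR g) \<and>
        deq (2^(m div 2)) (Delta p q m (aL g)) (Phi p q (Delta p q m (aR g)))"
      using inJ_dec less.prems m by simp
    have dh: "h = AN (af h) (aL h) (aR h) \<and> inJ p q m (aL h) \<and> inJ p q m (aR h) \<and>
        deq (2^(m div 2)) (Delta p q m (aL h)) (Phi p q (Delta p q m (aR h)))"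
      using inJ_dec less.prems m by simp
    define f where "f = af g"
    define a where "a = aL g"
    define b where "b = aR g"
    define f' where "f' = af h"
    define a' where "a' = aL h"
    define b' where "b' = aR h"
    have g: "g = AN f a b" and h: "h = AN f' a' b'" using dg dh unfolding f_def a_def b_def f'_def a'_def b'_def by auto
    have Ja: "inJ p q m a" "inJ p q m b" "inJ p q m a'" "inJ p q m b'"
      using dg dh unfolding a_def b_def a'_def b'_def by auto
    let ?m1 = "2^(m div 2) :: int"
    have Cg: "deq ?m1 (Delta p q m a) (Phi p q (Delta p q m b))"
      and Ch: "deq ?m1 (Delta p q m a') (Phi p q (Delta p q m b'))"
      using dg dh unfolding a_def b_def a'_def b'_def by auto
    define x1 where "x1 = (if f then amult a b' else amult a a')"
    define x2 where "x2 = (if f then amult b a' else amult b b')"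
    define U where "U = (if f then b' else a')"
    define V where "V = (if f then a' else b')"
    have gh: "amult g h = AN (f \<noteq> f') x1 x2" unfolding g h x1_def x2_def by simp
    have x1U: "x1 = amult a U" and x2V: "x2 = amult b V" unfolding x1_def x2_def U_def V_def by auto
    have JU: "inJ p q m U" "inJ p q m V" unfolding U_def V_def using Ja by auto
    have R1: "inJ p q m x1 \<and> [psi p q m x1 = psi p q m a + psi p q m U] (mod ?m1) \<and>
        deq ?m1 (Delta p q m x1) (dmul (Delta p q m a) (Delta p q m U))"
      unfolding x1U using IH1 Ja JU by blast
    have R2: "inJ p q m x2 \<and> [psi p q m x2 = psi p q m b + psi p q m V] (mod ?m1) \<and>
        deq ?m1 (Delta p q m x2) (dmul (Delta p q m b) (Delta p q m V))"
      unfolding x2V using IH1 Ja JU by blast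
    have UV: "deq ?m1 (Delta p q m U) (Phi p q (Delta p q m V))"
    proof (cases f)
      case True
      have "deq ?m1 (Phi p q (Delta p q m a')) (Delta p q m b')"
        using deq_Phi[OF Ch, of p q] by (simp add: Phi_Phi)
      then show ?thesis using True unfolding U_def V_def by (simp add: deq_sym)
    next
      case False then show ?thesis using Ch unfolding U_def V_def by simp
    qed
    have newC: "deq ?m1 (Delta p q m x1) (Phi p q (Delta p q m x2))"
    proof -
      have "deq ?m1 (Delta p q m x1) (dmul (Phi p q (Delta p q m b)) (Phi p q (Delta p q m V)))"
        using R1 deq_dmul[OF Cg UV] deq_trans by blast
      moreover have "deq ?m1 (Phi p q (Delta p q m x2)) (dmul (Phi p q (Delta p q m b)) (Phi p q (Delta p q m V)))"
        using deq_Phi[OF conjunct2[OF conjunct2[OF R2]], of p q] by (simp add: Phi_dmul)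
      ultimately show ?thesis using deq_trans deq_sym by blast
    qed
    have Jgh: "inJ p q n (amult g h)"
      using inJ_ge3[of n p q "amult g h"] 3 m newC R1 R2 autlev_amult[OF inJ_autlev[OF less.prems(2)] inJ_autlev[OF less.prems(3)]]
      by (simp add: gh)
    show ?thesis
    proof (cases "odd n")
      case True
      have K: "n div 2 = m div 2" using True m by (auto elim!: oddE)
      have ps: "\<And>y. psi p q n y = zdiv (m div 2) s (psi p q m (aL y) + psi p q m (aR y))"
        using psi_odd[of n] True 3 m K s_def by simp
      have Ds: "\<And>y. Delta p q n y = (af y, psi p q m (aL y) - psi p q m (aR y))"
        using Delta_odd True 3 m by simp
      have sum: "[psi p q m x1 + psi p q m x2 = (psi p q m a + psi p q m b) + (psi p q m a' + psi p q m b')] (mod ?m1)"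
        using cong_add[OF conjunct1[OF conjunct2[OF R1]] conjunct1[OF conjunct2[OF R2]]]
        unfolding U_def V_def by (cases f) (simp_all add: ac_simps)
      have P: "[psi p q n (amult g h) = psi p q n g + psi p q n h] (mod 2^(n div 2))"
        unfolding ps K gh using zdiv_add[OF o[folded s_def] sum] by (simp add: g h)
      have dif: "[psi p q m x1 - psi p q m x2 = (psi p q m a - psi p q m b) + (if f then - (psi p q m a' - psi p q m b') else psi p q m a' - psi p q m b')] (mod ?m1)"
        using cong_diff[OF conjunct1[OF conjunct2[OF R1]] conjunct1[OF conjunct2[OF R2]]]
        unfolding U_def V_def by (cases f) (simp_all add: algebra_simps)
      have D: "deq (2^(n div 2)) (Delta p q n (amult g h)) (dmul (Delta p q n g) (Delta p q n h))"
        unfolding Ds K gh using dif by (cases f) (simp_all add: g h dmul_def)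
      show ?thesis using Jgh P D by blast
    next
      case False
      obtain m2 where m2: "m = Suc m2" "2 \<le> m2" using m 3 False by (cases m) auto
      have oddm: "odd m" using False m by simp
      have K: "n div 2 = Suc (m div 2)" "m2 div 2 = m div 2" "n div 2 - 1 = m div 2"
        using False m m2 by (auto elim!: evenE)
      have pw: "(2::int)^(n div 2) = 2 * ?m1" using K by simp
      have IH2: "\<And>x y. inJ p q m2 x \<Longrightarrow> inJ p q m2 y \<Longrightarrow>
        [psi p q m2 (amult x y) = psi p q m2 x + psi p q m2 y] (mod ?m1)"
        using less.IH[of m2] m m2 K by auto
      let ?P2 = "psi p q m2"
      have dd: "\<And>y. inJ p q m y \<Longrightarrow> y = AN (af y) (aL y) (aR y) \<and> inJ p q m2 (aL y) \<and> inJ p q m2 (aR y) \<and>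
        deq (2^(m2 div 2)) (Delta p q m2 (aL y)) (Phi p q (Delta p q m2 (aR y)))"
        using inJ_dec m2 by simp
      have oc: "\<And>y z. deq ?m1 (Delta p q m y) (Phi p q (Delta p q m z)) \<Longrightarrow> af y = af z \<and>
         [?P2 (aL y) - ?P2 (aR y) = (if af z then c else 0) - (?P2 (aL z) - ?P2 (aR z))] (mod ?m1)"
        using odd_constraint[OF oddm] m m2 unfolding c_def s_def by fastforce
      note Cg2 = oc[OF Cg] and Ch2 = oc[OF Ch]
      note da = dd[OF Ja(1)] and db = dd[OF Ja(2)] and da' = dd[OF Ja(3)] and db' = dd[OF Ja(4)]
      note dU = dd[OF JU(1)] and dV = dd[OF JU(2)]
      have X1: "[?P2 (aL x1) = ?P2 (aL a) + (if af a then (if f then ?P2 (aR b') else ?P2 (aR a')) else (if f then ?P2 (aL b') else ?P2 (aL a')))] (mod ?m1)"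
      proof -
        have e: "aL x1 = (if af a then amult (aL a) (aR U) else amult (aL a) (aL U))"
          using amult_sel[OF conjunct1[OF da] conjunct1[OF dU]] x1U by simp
        have "[?P2 (aL x1) = ?P2 (aL a) + ?P2 (if af a then aR U else aL U)] (mod ?m1)"
          unfolding e using IH2 da dU by (cases "af a") auto
        then show ?thesis unfolding U_def by (cases f; cases "af a") auto
      qed
      have X2: "[?P2 (aL x2) = ?P2 (aL b) + (if af a then (if f then ?P2 (aR a') else ?P2 (aR b')) else (if f then ?P2 (aL a') else ?P2 (aL b')))] (mod ?m1)"
      proof -
        have e: "aL x2 = (if af a then amult (aL b) (aR V) else amult (aL b) (aL V))"
          using amult_sel[OF conjunct1[OF db] conjunct1[OF dV]] x2V Cg2 by simp
        have "[?P2 (aL x2) = ?P2 (aL b) + ?P2 (if af a then aR V else aL V)] (mod ?m1)"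
          unfolding e using IH2 db dV by (cases "af a") auto
        then show ?thesis unfolding V_def by (cases f; cases "af a") auto
      qed
      have afx1: "af x1 = (af a \<noteq> af a')"
        using amult_sel[OF conjunct1[OF da] conjunct1[OF dU]] x1U Ch2 unfolding U_def by (cases f) auto
      have pe: "\<And>y. psi p q n y = zdiv (n div 2) (s^2) (2 * (?P2 (aL (aL y)) + ?P2 (aL (aR y))) - (if af (aL y) then c else 0))"
        using psi_even[of n] False 3 m m2 unfolding s_def c_def by simp
      have o2: "odd (s^2)" using o s_def by simp
      have G: "[s^2 * psi p q n g = 2*(?P2 (aL a) + ?P2 (aL b)) - (if af a then c else 0)] (mod 2*?m1)"
        using zdiv_spec[OF o2, of "n div 2"] pw unfolding pe[of g] by (simp add: g)
      have H: "[s^2 * psi p q n h = 2*(?P2 (aL a') + ?P2 (aL b')) - (if af a' then c else 0)] (mod 2*?m1)"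
        using zdiv_spec[OF o2, of "n div 2"] pw unfolding pe[of h] by (simp add: h)
      have cg: "[?P2 (aL a) - ?P2 (aR a) = (if af a then c else 0) - (?P2 (aL b) - ?P2 (aR b))] (mod ?m1)"
        using Cg2 by simp
      have ch: "[?P2 (aL a') - ?P2 (aR a') = (if af a' then c else 0) - (?P2 (aL b') - ?P2 (aR b'))] (mod ?m1)"
        using Ch2 by simp
      have main: "[s^2 * (psi p q n g + psi p q n h) = 2*(?P2 (aL x1) + ?P2 (aL x2)) - (if af a \<noteq> af a' then c else 0)] (mod 2*?m1)"
        by (rule even_psi_alg[OF cg ch G H X1 X2])
      have P: "[psi p q n (amult g h) = psi p q n g + psi p q n h] (mod 2^(n div 2))"
      proof -
        have "psi p q n (amult g h) = zdiv (n div 2) (s^2) (2*(?P2 (aL x1) + ?P2 (aL x2)) - (if af a \<noteq> af a' then c else 0))"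
          unfolding gh pe[of "AN (f \<noteq> f') x1 x2"] using afx1 by simp
        then show ?thesis using zdiv_cong[OF o2 main[folded pw]] by simp
      qed
      have De: "\<And>y. Delta p q n y = (af y, s * psi p q n y - 2 * psi p q m (aR y))"
        using Delta_even[of n] False 3 m s_def by simp
      have sh0: "[s * psi p q n h = psi p q (n-1) (aL h) + psi p q (n-1) (aR h)] (mod 2^(n div 2 - 1))"
      proof -
        have "4 \<le> n" using False 3 by (cases "n = 3") auto
        then show ?thesis using even_aux[OF o _ _ less.prems(3)] False unfolding s_def by simp
      qed
      have sh: "[s * psi p q n h = psi p q m a' + psi p q m b'] (mod ?m1)"
        using sh0 unfolding K(3) a'_def b'_def using m(1) by simp
      have Vv: "psi p q m V = (if f then psi p q m a' else psi p q m b')" unfolding V_def by simp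
      have E: "[s * psi p q n (amult g h) - 2 * psi p q m x2 = (s * psi p q n g - 2 * psi p q m b) +
          (if f then -(s * psi p q n h - 2 * psi p q m b') else s * psi p q n h - 2 * psi p q m b')] (mod 2*?m1)"
        by (rule even_delta_alg[OF P[unfolded pw] conjunct1[OF conjunct2[OF R2]] sh Vv])
      have D: "deq (2^(n div 2)) (Delta p q n (amult g h)) (dmul (Delta p q n g) (Delta p q n h))"
        unfolding De gh pw using E[unfolded gh]
        by (cases f) (simp_all add: dmul_def f_def[symmetric] b_def[symmetric] b'_def[symmetric] f'_def[symmetric])
      show ?thesis using Jgh P D by blast
    qed
  qed
qed


lemma pow_facts:
  assumes o: "odd (int p + int q)" and n1: "1 \<le> n" and gJ: "inJ p q n g"
  shows "inJ p q n (apow n g r) \<and> [psi p q n (apow n g r) = int r * psi p q n g] (mod 2^(n div 2)) \<and>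
    (deq (2^(n div 2)) (Delta p q n g) (True, x) \<longrightarrow>
      deq (2^(n div 2)) (Delta p q n (apow n g r)) (odd r, if odd r then x else 0))"
proof (induction r)
  case 0
  have "psi p q n (aid n) = 0 \<and> Delta p q n (aid n) = (False, 0) \<and> inJ p q n (aid n)"
    using aid_facts[OF o, of n] n1 by blast
  then show ?case by (simp add: cong_refl)
next
  case (Suc r)
  have H: "inJ p q n (amult g (apow n g r)) \<and>
    [psi p q n (amult g (apow n g r)) = psi p q n g + psi p q n (apow n g r)] (mod 2^(n div 2)) \<and>
    deq (2^(n div 2)) (Delta p q n (amult g (apow n g r))) (dmul (Delta p q n g) (Delta p q n (apow n g r)))"
    using hom[OF o n1 gJ] Suc.IH by blast
  have P: "[psi p q n (apow n g (Suc r)) = int (Suc r) * psi p q n g] (mod 2^(n div 2))"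
  proof -
    have "[psi p q n g + psi p q n (apow n g r) = psi p q n g + int r * psi p q n g] (mod 2^(n div 2))"
      using Suc.IH by (intro cong_add cong_refl) blast
    moreover have "psi p q n g + int r * psi p q n g = int (Suc r) * psi p q n g" by (simp add: algebra_simps)
    ultimately show ?thesis using cong_trans[OF conjunct1[OF conjunct2[OF H]]] by simp
  qed
  have D: "deq (2^(n div 2)) (Delta p q n g) (True, x) \<longrightarrow>
      deq (2^(n div 2)) (Delta p q n (apow n g (Suc r))) (odd (Suc r), if odd (Suc r) then x else 0)"
  proof
    assume dx: "deq (2^(n div 2)) (Delta p q n g) (True, x)"
    then have "deq (2^(n div 2)) (dmul (Delta p q n g) (Delta p q n (apow n g r))) (dmul (True, x) (odd r, if odd r then x else 0))"
      using Suc.IH deq_dmul by blast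
    moreover have "dmul (True, x) (odd r, if odd r then x else 0) = (odd (Suc r), if odd (Suc r) then x else 0)"
      by (simp add: dmul_def)
    ultimately show "deq (2^(n div 2)) (Delta p q n (apow n g (Suc r))) (odd (Suc r), if odd (Suc r) then x else 0)"
      using deq_trans[OF conjunct2[OF conjunct2[OF H]]] by simp
  qed
  show ?case using H P D by simp
qed

lemma pow_children:
  assumes o: "odd (int p + int q)" and m2: "2 \<le> m" and AJ: "inJ p q (Suc m) A" and fA: "af A"
  shows "[psi p q m (aL (apow (Suc m) A r)) = int (r div 2) * (psi p q m (aL A) + psi p q m (aR A)) + (if odd r then psi p q m (aL A) else 0)] (mod 2^(m div 2)) \<and>
         [psi p q m (aR (apow (Suc m) A r)) = int (r div 2) * (psi p q m (aL A) + psi p q m (aR A)) + (if odd r then psi p q m (aR A) else 0)] (mod 2^(m div 2))"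
proof (induction r)
  case 0
  then show ?case using aid_facts[OF o, of m] by (simp add: cong_refl)
next
  case (Suc r)
  let ?a = "psi p q m (aL A)" and ?b = "psi p q m (aR A)"
  have Jr: "inJ p q (Suc m) (apow (Suc m) A r)" using pow_facts[OF o _ AJ] by simp
  note dA = inJ_dec[OF AJ m2] and dR = inJ_dec[OF Jr m2]
  have e: "apow (Suc m) A (Suc r) = amult A (apow (Suc m) A r)" by simp
  have eL: "aL (apow (Suc m) A (Suc r)) = amult (aL A) (aR (apow (Suc m) A r))"
   and eR: "aR (apow (Suc m) A (Suc r)) = amult (aR A) (aL (apow (Suc m) A r))"
    unfolding e using amult_sel[OF conjunct1[OF dA] conjunct1[OF dR]] fA by simp_all
  have h1: "[psi p q m (aL (apow (Suc m) A (Suc r))) = ?a + psi p q m (aR (apow (Suc m) A r))] (mod 2^(m div 2))"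
    unfolding eL using hom[OF o, of m] dA dR m2 by simp
  have h2: "[psi p q m (aR (apow (Suc m) A (Suc r))) = ?b + psi p q m (aL (apow (Suc m) A r))] (mod 2^(m div 2))"
    unfolding eR using hom[OF o, of m] dA dR m2 by simp
  have a1: "[?a + psi p q m (aR (apow (Suc m) A r)) = ?a + (int (r div 2) * (?a + ?b) + (if odd r then ?b else 0))] (mod 2^(m div 2))"
    using Suc.IH by (intro cong_add cong_refl) blast
  have a2: "[?b + psi p q m (aL (apow (Suc m) A r)) = ?b + (int (r div 2) * (?a + ?b) + (if odd r then ?a else 0))] (mod 2^(m div 2))"
    using Suc.IH by (intro cong_add cong_refl) blast
  have dv: "Suc r div 2 = (if odd r then r div 2 + 1 else r div 2)" by presburger
  have r1: "?a + (int (r div 2) * (?a + ?b) + (if odd r then ?b else 0)) = int (Suc r div 2) * (?a + ?b) + (if odd (Suc r) then ?a else 0)"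
   and r2: "?b + (int (r div 2) * (?a + ?b) + (if odd r then ?a else 0)) = int (Suc r div 2) * (?a + ?b) + (if odd (Suc r) then ?b else 0)"
    by (cases "odd r"; simp add: dv algebra_simps)+
  show ?case using cong_trans[OF h1 a1] cong_trans[OF h2 a2] r1 r2 by simp
qed


lemma apow1: "apow (Suc 0) (AN True AE AE) r = AN (odd r) AE AE"
  by (induction r) auto

lemma cong_odd_mult2: "odd (d::int) \<Longrightarrow> [x * d = x] (mod 2)"
proof -
  assume "odd d"
  then have "2 dvd (d - 1)" by presburger
  then have "2 dvd x * (d - 1)" by simp
  moreover have "x * (d - 1) = x * d - x" by (simp add: algebra_simps)
  ultimately show ?thesis unfolding cong_iff_dvd_diff by simp
qed

lemma cong_bool2: "[(if odd r then 1 else 0) = int r] (mod 2)"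
  unfolding cong_iff_dvd_diff by (cases "odd r") auto

lemma lin_cong: "[(x::int) = x'] (mod M) \<Longrightarrow> [y = y'] (mod M) \<Longrightarrow>
  [int k * (x + y) + (if b then x else 0) = int k * (x' + y') + (if b then x' else 0)] (mod M)"
  by (cases b) (auto intro!: cong_add cong_scalar_left)

lemma main:
  assumes o: "odd (int p + int q)"
  shows "1 \<le> n \<Longrightarrow> (\<forall>r. inJ p q n (brk p q r n) \<and> [psi p q n (brk p q r n) = int r] (mod 2^(n div 2)) \<and>
     deq (2^(n div 2)) (Delta p q n (brk p q r n)) (True, int r * (int p - int q))) \<and>
    inJ p q n (yel p q n) \<and> [psi p q n (yel p q n) = 1] (mod 2^(n div 2)) \<and>
    deq (2^(n div 2)) (Delta p q n (yel p q n)) (False, int p - int q)"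
proof (induction n rule: less_induct)
  case (less n)
  define s where "s = int p + int q"
  define c where "c = s * (int p - int q)"
  have pq: "odd (int p - int q)" using o by presburger
  consider "n = 1" | "n = 2" | "3 \<le> n" using less.prems by linarith
  then show ?case
  proof cases
    case 1
    then show ?thesis by (simp add: yel_def)
  next
    case 2
    have b2: "\<And>r. brk p q r n = AN True (AN (odd r) AE AE) (AN (odd r) AE AE)"
      using 2 by (simp add: numeral_eq_Suc apow1)
    have y2: "yel p q n = AN False (AN True AE AE) (AN True AE AE)"
      using 2 by (simp add: yel_def numeral_eq_Suc)
    have c1: "\<And>r. [(if odd r then 1 else 0) = int r * (int p - int q)] (mod 2)"
      using cong_bool2 cong_odd_mult2[OF pq] by (metis cong_sym cong_trans)
    have c2: "[1 = int p - int q] (mod 2)" using pq unfolding cong_iff_dvd_diff by presburger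
    show ?thesis unfolding b2 y2 using 2 c1 c2 cong_bool2 by (simp add: numeral_eq_Suc)
  next
    case 3
    obtain m where m: "n = Suc m" "2 \<le> m" using 3 by (cases n) auto
    have m1: "1 \<le> m" using m by simp
    have IHm: "(\<forall>r. inJ p q m (brk p q r m) \<and> [psi p q m (brk p q r m) = int r] (mod 2^(m div 2)) \<and>
     deq (2^(m div 2)) (Delta p q m (brk p q r m)) (True, int r * (int p - int q))) \<and>
      inJ p q m (yel p q m) \<and> [psi p q m (yel p q m) = 1] (mod 2^(m div 2)) \<and>
      deq (2^(m div 2)) (Delta p q m (yel p q m)) (False, int p - int q)"
      using less.IH[of m] m by auto
    let ?M = "2^(m div 2) :: int"
    define A where "A = brk p q p m"
    define B where "B = brk p q q m"
    have br: "\<And>r. brk p q r n = AN True (apow m A r) (apow m B r)"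
      unfolding A_def B_def using m by (cases m) auto
    have yl: "yel p q n = AN False A B" unfolding A_def B_def yel_def using m by simp
    have JA: "inJ p q m A" "inJ p q m B"
      and PA: "[psi p q m A = int p] (mod ?M)" "[psi p q m B = int q] (mod ?M)"
      and DA: "deq ?M (Delta p q m A) (True, int p * (int p - int q))" "deq ?M (Delta p q m B) (True, int q * (int p - int q))"
      using IHm unfolding A_def B_def by auto
    have powX: "inJ p q m (apow m X r) \<and> [psi p q m (apow m X r) = int r * int t] (mod ?M) \<and>
       deq ?M (Delta p q m (apow m X r)) (odd r, if odd r then int t * (int p - int q) else 0)"
      if XJ: "inJ p q m X" and XP: "[psi p q m X = int t] (mod ?M)"
        and XD: "deq ?M (Delta p q m X) (True, int t * (int p - int q))" for X t r
    proof -
      have "inJ p q m (apow m X r) \<and> [psi p q m (apow m X r) = int r * psi p q m X] (mod ?M) \<and>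
        (deq ?M (Delta p q m X) (True, int t * (int p - int q)) \<longrightarrow>
         deq ?M (Delta p q m (apow m X r)) (odd r, if odd r then int t * (int p - int q) else 0))"
        using pow_facts[OF o m1 XJ] by blast
      moreover have "[int r * psi p q m X = int r * int t] (mod ?M)" using XP by (rule cong_scalar_left)
      ultimately show ?thesis using XD cong_trans by blast
    qed
    note powA = powX[OF JA(1) PA(1) DA(1)] and powB = powX[OF JA(2) PA(2) DA(2)]
    have Jr: "inJ p q n (brk p q r n)" for r
    proof -
      have e: "Phi p q (odd r, if odd r then int q * (int p - int q) else 0) = (odd r, if odd r then int p * (int p - int q) else 0)"
        by (simp add: Phi_def algebra_simps)
      have "deq ?M (Phi p q (Delta p q m (apow m B r))) (odd r, if odd r then int p * (int p - int q) else 0)"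
        using deq_Phi[OF conjunct2[OF conjunct2[OF powB[of r]]], of p q] e by simp
      then have "deq ?M (Delta p q m (apow m A r)) (Phi p q (Delta p q m (apow m B r)))"
        using powA[of r] deq_trans deq_sym by blast
      moreover have "autlev m (apow m A r)" "autlev m (apow m B r)" using powA powB inJ_autlev by blast+
      ultimately show ?thesis unfolding br using inJ_ge3[of n p q "AN True (apow m A r) (apow m B r)"] 3 m powA powB
        by simp
    qed
    have Jy: "inJ p q n (yel p q n)"
    proof -
      have e: "Phi p q (True, int q * (int p - int q)) = (True, int p * (int p - int q))"
        by (simp add: Phi_def algebra_simps)
      have "deq ?M (Phi p q (Delta p q m B)) (True, int p * (int p - int q))"
        using deq_Phi[OF DA(2), of p q] e by simp
      then have "deq ?M (Delta p q m A) (Phi p q (Delta p q m B))"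
        using DA(1) deq_trans deq_sym by blast
      moreover have "autlev m A" "autlev m B" using JA inJ_autlev by blast+
      ultimately show ?thesis unfolding yl using inJ_ge3[of n p q "AN False A B"] 3 m JA
        by simp
    qed
    have os: "odd s" using o s_def by simp
    show ?thesis
    proof (cases "odd n")
      case True
      have K: "n div 2 = m div 2" using True m by (auto elim!: oddE)
      have ps: "\<And>y. psi p q n y = zdiv (m div 2) s (psi p q m (aL y) + psi p q m (aR y))"
        using psi_odd[of n] True 3 m K s_def by simp
      have Ds: "\<And>y. Delta p q n y = (af y, psi p q m (aL y) - psi p q m (aR y))"
        using Delta_odd True 3 m by simp
      have Pr: "[psi p q n (brk p q r n) = int r] (mod 2^(n div 2))" for r
      proof -
        have "[psi p q m (apow m A r) + psi p q m (apow m B r) = int r * int p + int r * int q] (mod ?M)"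
          using powA powB by (intro cong_add) blast+
        then have "[s * int r = psi p q m (apow m A r) + psi p q m (apow m B r)] (mod ?M)"
          by (simp add: s_def algebra_simps cong_sym)
        then show ?thesis unfolding ps K br using zdiv_cong[OF os] by simp
      qed
      have Dr: "deq (2^(n div 2)) (Delta p q n (brk p q r n)) (True, int r * (int p - int q))" for r
      proof -
        have "[psi p q m (apow m A r) - psi p q m (apow m B r) = int r * int p - int r * int q] (mod ?M)"
          using powA powB by (intro cong_diff) blast+
        then show ?thesis unfolding Ds K br by (simp add: algebra_simps)
      qed
      have Py: "[psi p q n (yel p q n) = 1] (mod 2^(n div 2))"
      proof -
        have "[psi p q m A + psi p q m B = int p + int q] (mod ?M)"
          using PA by (intro cong_add) blast+
        then have "[s * 1 = psi p q m A + psi p q m B] (mod ?M)"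
          by (simp add: s_def cong_sym)
        then show ?thesis unfolding ps K yl using zdiv_cong[OF os] by simp
      qed
      have Dy: "deq (2^(n div 2)) (Delta p q n (yel p q n)) (False, int p - int q)"
      proof -
        have "[psi p q m A - psi p q m B = int p - int q] (mod ?M)"
          using PA by (intro cong_diff) blast+
        then show ?thesis unfolding Ds K yl by simp
      qed
      show ?thesis using Jr Pr Dr Jy Py Dy by blast
    next
      case False
      obtain m2 where m2: "m = Suc m2" "2 \<le> m2" using m 3 False by (cases m) auto
      have oddm: "odd m" using False m by simp
      have K: "n div 2 = Suc (m div 2)" "m2 div 2 = m div 2"
        using False m m2 by (auto elim!: evenE)
      have pw: "(2::int)^(n div 2) = 2 * ?M" using K by simp
      have IH2: "\<forall>r. inJ p q m2 (brk p q r m2) \<and> [psi p q m2 (brk p q r m2) = int r] (mod ?M) \<and>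
         deq ?M (Delta p q m2 (brk p q r m2)) (True, int r * (int p - int q))"
        using less.IH[of m2] m m2 K by auto
      have m21: "1 \<le> m2" using m2 by simp
      have pw2: "[psi p q m2 (apow m2 (brk p q t m2) e) = int e * int t] (mod ?M)" for t e
      proof -
        have "[psi p q m2 (apow m2 (brk p q t m2) e) = int e * psi p q m2 (brk p q t m2)] (mod ?M)"
          using pow_facts[OF o m21, of "brk p q t m2"] IH2 K by simp
        moreover have "[int e * psi p q m2 (brk p q t m2) = int e * int t] (mod ?M)"
          using IH2 by (intro cong_scalar_left) blast
        ultimately show ?thesis by (rule cong_trans)
      qed
      have Ae: "A = AN True (apow m2 (brk p q p m2) p) (apow m2 (brk p q q m2) p)"
        unfolding A_def using m2 by (cases m2) auto
      have Be: "B = AN True (apow m2 (brk p q p m2) q) (apow m2 (brk p q q m2) q)"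
        unfolding B_def using m2 by (cases m2) auto
      have o2: "odd (s^2)" using os by simp
      have pe: "\<And>y. psi p q n y = zdiv (n div 2) (s^2) (2 * (psi p q m2 (aL (aL y)) + psi p q m2 (aL (aR y))) - (if af (aL y) then c else 0))"
        using psi_even[of n] False 3 m m2 unfolding s_def c_def by simp
      have De: "\<And>y. Delta p q n y = (af y, s * psi p q n y - 2 * psi p q m (aR y))"
        using Delta_even[of n] False 3 m s_def by simp
      have afp: "af (apow m X r) = odd r" if "deq ?M (Delta p q m (apow m X r)) (odd r, v)" for X r v
        using that Delta_odd[OF oddm] m2 by simp
      have XA: "[psi p q m2 (aL (apow m A r)) = int (r div 2) * (int p * int p + int p * int q) + (if odd r then int p * int p else 0)] (mod ?M)" for r
      proof -
        have "[psi p q m2 (aL (apow m A r)) = int (r div 2) * (psi p q m2 (aL A) + psi p q m2 (aR A)) + (if odd r then psi p q m2 (aL A) else 0)] (mod ?M)"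
          using pow_children[OF o m2(2), of A r] JA(1) m2 K by (simp add: Ae)
        moreover have "[int (r div 2) * (psi p q m2 (aL A) + psi p q m2 (aR A)) + (if odd r then psi p q m2 (aL A) else 0)
           = int (r div 2) * (int p * int p + int p * int q) + (if odd r then int p * int p else 0)] (mod ?M)"
          by (rule lin_cong) (simp_all add: Ae pw2)
        ultimately show ?thesis by (rule cong_trans)
      qed
      have XB: "[psi p q m2 (aL (apow m B r)) = int (r div 2) * (int q * int p + int q * int q) + (if odd r then int q * int p else 0)] (mod ?M)" for r
      proof -
        have "[psi p q m2 (aL (apow m B r)) = int (r div 2) * (psi p q m2 (aL B) + psi p q m2 (aR B)) + (if odd r then psi p q m2 (aL B) else 0)] (mod ?M)"
          using pow_children[OF o m2(2), of B r] JA(2) m2 K by (simp add: Be)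
        moreover have "[int (r div 2) * (psi p q m2 (aL B) + psi p q m2 (aR B)) + (if odd r then psi p q m2 (aL B) else 0)
           = int (r div 2) * (int q * int p + int q * int q) + (if odd r then int q * int p else 0)] (mod ?M)"
          by (rule lin_cong) (simp_all add: Be pw2)
        ultimately show ?thesis by (rule cong_trans)
      qed
      have Pr: "[psi p q n (brk p q r n) = int r] (mod 2^(n div 2))" for r
      proof -
        have afr: "af (apow m A r) = odd r" using afp powA by blast
        have ident: "2 * ((int (r div 2) * (int p * int p + int p * int q) + (if odd r then int p * int p else 0)) +
            (int (r div 2) * (int q * int p + int q * int q) + (if odd r then int q * int p else 0))) - (if odd r then c else 0)
            = s^2 * int r"
        proof (cases "odd r")
          case True
          then obtain k where "r = 2*k+1" by (auto elim!: oddE)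
          then show ?thesis using True by (simp add: s_def c_def algebra_simps power2_eq_square)
        next
          case False
          then obtain k where "r = 2*k" by (auto elim!: evenE)
          then show ?thesis using False by (simp add: s_def c_def algebra_simps power2_eq_square)
        qed
        have "[2 * (psi p q m2 (aL (apow m A r)) + psi p q m2 (aL (apow m B r))) = 2 * ((int (r div 2) * (int p * int p + int p * int q) + (if odd r then int p * int p else 0)) +
            (int (r div 2) * (int q * int p + int q * int q) + (if odd r then int q * int p else 0)))] (mod 2*?M)"
          by (rule cong2) (rule cong_add[OF XA XB])
        then have "[2 * (psi p q m2 (aL (apow m A r)) + psi p q m2 (aL (apow m B r))) - (if odd r then c else 0) = s^2 * int r] (mod 2*?M)"
          using ident cong_diff[OF _ cong_refl] by metis
        then have "[s^2 * int r = 2 * (psi p q m2 (aL (apow m A r)) + psi p q m2 (aL (apow m B r))) - (if af (apow m A r) then c else 0)] (mod 2^(n div 2))"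
          unfolding pw afr by (rule cong_sym)
        then show ?thesis unfolding pe br using zdiv_cong[OF o2] by simp
      qed
      have Dr: "deq (2^(n div 2)) (Delta p q n (brk p q r n)) (True, int r * (int p - int q))" for r
      proof -
        have a: "[s * psi p q n (brk p q r n) = s * int r] (mod 2*?M)" using Pr[of r] unfolding pw by (rule cong_scalar_left)
        have b: "[2 * psi p q m (apow m B r) = 2 * (int r * int q)] (mod 2*?M)" using powB by (intro cong2) blast
        have "[s * psi p q n (brk p q r n) - 2 * psi p q m (apow m B r) = s * int r - 2 * (int r * int q)] (mod 2*?M)"
          by (rule cong_diff[OF a b])
        moreover have "s * int r - 2 * (int r * int q) = int r * (int p - int q)" by (simp add: s_def algebra_simps)
        ultimately show ?thesis unfolding De pw by (simp add: br)
      qed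
      have Py: "[psi p q n (yel p q n) = 1] (mod 2^(n div 2))"
      proof -
        have "[2 * (psi p q m2 (aL A) + psi p q m2 (aL B)) = 2 * (1 * int p * int p + int q * int p)] (mod 2*?M)"
          by (rule cong2) (rule cong_add, simp_all add: Ae Be pw2)
        moreover have "2 * (1 * int p * int p + int q * int p) - c = s^2 * 1" by (simp add: s_def c_def algebra_simps power2_eq_square)
        ultimately have "[2 * (psi p q m2 (aL A) + psi p q m2 (aL B)) - c = s^2 * 1] (mod 2*?M)"
          using cong_diff[OF _ cong_refl] by metis
        then have "[s^2 * 1 = 2 * (psi p q m2 (aL A) + psi p q m2 (aL B)) - (if af A then c else 0)] (mod 2^(n div 2))"
          unfolding pw by (simp add: Ae cong_sym)
        then show ?thesis unfolding pe yl using zdiv_cong[OF o2] by simp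
      qed
      have Dy: "deq (2^(n div 2)) (Delta p q n (yel p q n)) (False, int p - int q)"
      proof -
        have a: "[s * psi p q n (yel p q n) = s * 1] (mod 2*?M)" using Py unfolding pw by (rule cong_scalar_left)
        have b: "[2 * psi p q m B = 2 * int q] (mod 2*?M)" using PA by (intro cong2) blast
        have "[s * psi p q n (yel p q n) - 2 * psi p q m B = s * 1 - 2 * int q] (mod 2*?M)"
          by (rule cong_diff[OF a b])
        moreover have "s * 1 - 2 * int q = int p - int q" by (simp add: s_def)
        ultimately show ?thesis unfolding De pw by (simp add: yl)
      qed
      show ?thesis using Jr Pr Dr Jy Py Dy by blast
    qed
  qed
qed


theorem theorem2:
  fixes p q n :: nat
  assumes "p > 0" and "q > 0" and "odd (p + q)" and "n \<ge> 1"
  shows "inJ p q n (yel p q n) \<and> inJ p q n (brk p q p n) \<and> inJ p q n (brk p q q n)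
    \<and> [psi p q n (yel p q n) = 1] (mod 2 ^ (n div 2))
    \<and> [psi p q n (brk p q p n) = int p] (mod 2 ^ (n div 2))
    \<and> [psi p q n (brk p q q n) = int q] (mod 2 ^ (n div 2))
    \<and> deq (2 ^ (n div 2)) (Delta p q n (yel p q n)) (False, int p - int q)
    \<and> deq (2 ^ (n div 2)) (Delta p q n (brk p q p n)) (True, int p * (int p - int q))
    \<and> deq (2 ^ (n div 2)) (Delta p q n (brk p q q n)) (True, int q * (int p - int q))"
  proof -
  have o: "odd (int p + int q)" using assms(3) by simp
  show ?thesis using main[OF o assms(4)] by blast
qed

end
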